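(* Let $\langle S,L,\tau,\ell\rangle$ be a labelled Markov chain and let $s,t\in S$ with $s\simeq t$. Then the function $\delta_{\_}(s,t):(S\to\mathcal{D}(S))\to[0,1]$, $\sigma\mapsto\delta_\sigma(s,t)$, is continuous at $\tau$; that is, for every sequence $(\tau_n)_n$ of transition functions $\tau_n:S\to\mathcal{D}(S)$ converging to $\tau$ we have $\lim_n \delta_{\tau_n}(s,t)=0$.
   Context: A labelled Markov chain is a tuple $\langle S,L,\tau,\ell\rangle$ with $S$ a finite set of states, $L$ a finite set of labels, $\tau:S\to\mathcal{D}(S)$ a transition function ($\mathcal{D}(X)$ = probability distributions on $X$) and $\ell:S\to L$ a labelling; assume $|\ell(S)|\ge 2$. For $\mu,\nu\in\mathcal{D}(X)$, the set of couplings is $\Omega(\mu,\nu)=\{\omega\in\mathcal{D}(X\times X)\mid \forall x:\ \sum_y\omega(x,y)=\mu(x),\ \sum_y\omega(y,x)=\nu(x)\}$. Transition functions $S\to\mathcal{D}(S)$ are equipped with the metric $d_F(\sigma,\tau)=\max_{s\in S}\max_{x\in S}|\sigma(s)(x)-\tau(s)(x)|$, and convergence refers to this metric. The probabilistic bisimilarity distance $\delta_\tau:S\times S\to[0,1]$ is the least fixed point of $\Delta_\tau$, where $\Delta_\tau(d)(s,t)=1$ if $\ell(s)\ne\ell(t)$ and $\Delta_\tau(d)(s,t)=\inf_{\omega\in\Omega(\tau(s),\tau(t))}\sum_{u,v}\omega(u,v)d(u,v)$ otherwise. Let $S^2_\Delta=\{(s,s)\mid s\in S\}$, $S^2_1=\{(s,t)\mid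 \ell(s)\ne\ell(t)\}$, $S^2_{0?}=(S\times S)\setminus(S^2_\Delta\cup S^2_1)$. A policy for $\tau$ is a map $P:S\times S\to\mathcal{D}(S\times S)$ such that $P(s,t)\in\Omega(\tau(s),\tau(t))$ for all $(s,t)\in S^2_\Delta\cup S^2_{0?}$, and $P(s,t)$ is the point mass on $(s,t)$ for $(s,t)\in S^2_1$; $\mathcal{P}_\tau$ denotes the set of policies, and each $P$ induces a Markov chain $\langle S\times S,P\rangle$. Robust bisimilarity: $s\simeq t$ iff there is $P\in\mathcal{P}_\tau$ such that $(s,t)$ reaches $S^2_\Delta$ with probability $1$ in $\langle S\times S,P\rangle$. *)

theory Defs
  imports "HOL-Probability.Probability"
begin

text \<open>Labelled Markov chains over a finite state type 'a: transition function
  tau :: 'a => 'a pmf, labelling lab :: 'a => 'l.\<close>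

definition couplings :: "'a pmf \<Rightarrow> 'a pmf \<Rightarrow> ('a \<times> 'a) pmf set" where
  "couplings \<mu> \<nu> = {\<omega>. map_pmf fst \<omega> = \<mu> \<and> map_pmf snd \<omega> = \<nu>}"

definition dF :: "('a::finite \<Rightarrow> 'a pmf) \<Rightarrow> ('a \<Rightarrow> 'a pmf) \<Rightarrow> real" where
  "dF \<sigma> \<tau> = Max (range (\<lambda>(s, x). \<bar>pmf (\<sigma> s) x - pmf (\<tau> s) x\<bar>))"

definition Delta :: "('a::finite \<Rightarrow> 'a pmf) \<Rightarrow> ('a \<Rightarrow> 'l) \<Rightarrow> ('a \<Rightarrow> 'a \<Rightarrow> real) \<Rightarrow> ('a \<Rightarrow> 'a \<Rightarrow> real)" where
  "Delta \<tau> lab d s t =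
     (if lab s \<noteq> lab t then 1
      else (INF \<omega>\<in>couplings (\<tau> s) (\<tau> t). \<Sum>(u, v)\<in>UNIV. pmf \<omega> (u, v) * d u v))"

definition unit_valued :: "('a \<Rightarrow> 'a \<Rightarrow> real) \<Rightarrow> bool" where
  "unit_valued d \<longleftrightarrow> (\<forall>x y. 0 \<le> d x y \<and> d x y \<le> 1)"

definition delta :: "('a::finite \<Rightarrow> 'a pmf) \<Rightarrow> ('a \<Rightarrow> 'l) \<Rightarrow> 'a \<Rightarrow> 'a \<Rightarrow> real" where
  "delta \<tau> lab = (THE d. unit_valued d \<and> Delta \<tau> lab d = d \<and>
       (\<forall>d'. unit_valued d' \<and> Delta \<tau> lab d' = d' \<longrightarrow> d \<le> d'))"

definition policies :: "('a::finite \<Rightarrow> 'a pmf) \<Rightarrow> ('a \<Rightarrow> 'l) \<Rightarrow> ('a \<times> 'a \<Rightarrow> ('a \<times> 'a) pmf) set" where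
  "policies \<tau> lab = {P. \<forall>s t. (lab s = lab t \<longrightarrow> P (s, t) \<in> couplings (\<tau> s) (\<tau> t)) \<and>
                              (lab s \<noteq> lab t \<longrightarrow> P (s, t) = return_pmf (s, t))}"

fun reach_within :: "('b \<Rightarrow> 'b pmf) \<Rightarrow> 'b set \<Rightarrow> nat \<Rightarrow> 'b \<Rightarrow> real" where
  "reach_within P T 0 x = (if x \<in> T then 1 else 0)"
| "reach_within P T (Suc n) x =
     (if x \<in> T then 1 else measure_pmf.expectation (P x) (reach_within P T n))"

definition reach_prob :: "('b \<Rightarrow> 'b pmf) \<Rightarrow> 'b set \<Rightarrow> 'b \<Rightarrow> real" where
  "reach_prob P T x = (SUP n. reach_within P T n x)"

definition diag :: "('a \<times> 'a) set" where
  "diag = {(s, s) | s. True}"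

definition robust_bisim :: "('a::finite \<Rightarrow> 'a pmf) \<Rightarrow> ('a \<Rightarrow> 'l) \<Rightarrow> 'a \<Rightarrow> 'a \<Rightarrow> bool" where
  "robust_bisim \<tau> lab s t \<longleftrightarrow> (\<exists>P\<in>policies \<tau> lab. reach_prob P diag (s, t) = 1)"

end

theory Submission
  imports Defs
begin

lemma sum_pair_UNIV:
  fixes h :: "'a::finite \<times> 'b::finite \<Rightarrow> 'c::comm_monoid_add"
  shows "(\<Sum>z\<in>UNIV. h z) = (\<Sum>x\<in>UNIV. \<Sum>y\<in>UNIV. h (x, y))"
  by (simp add: sum.cartesian_product)

lemma sum_pair_UNIV':
  fixes h :: "'a::finite \<times> 'b::finite \<Rightarrow> 'c::comm_monoid_add"
  shows "(\<Sum>z\<in>UNIV. h z) = (\<Sum>y\<in>UNIV. \<Sum>x\<in>UNIV. h (x, y))"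
  by (simp only: sum_pair_UNIV, rule sum.swap)

lemma sum_pmf_UNIV: "(\<Sum>x\<in>(UNIV::'a::finite set). pmf p x) = 1"
  using measure_measure_pmf_finite[of "UNIV::'a set" p] by simp

lemma expect_sum:
  fixes f :: "'a::finite \<Rightarrow> real"
  shows "measure_pmf.expectation p f = (\<Sum>x\<in>UNIV. pmf p x * f x)"
  by (subst integral_measure_pmf_real[of UNIV]) (auto simp: mult.commute)

lemma pmf_fst:
  fixes \<omega> :: "('a::finite \<times> 'b::finite) pmf"
  shows "pmf (map_pmf fst \<omega>) x = (\<Sum>y\<in>UNIV. pmf \<omega> (x, y))"
proof -
  have "fst -` {x} = {x} \<times> (UNIV::'b set)" by auto
  moreover have "sum (pmf \<omega>) ({x} \<times> UNIV) = (\<Sum>a\<in>{x}. \<Sum>y\<in>UNIV. pmf \<omega> (a, y))"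
    by (subst sum.cartesian_product) simp
  ultimately show ?thesis
    by (simp add: pmf_map measure_measure_pmf_finite)
qed

lemma pmf_snd:
  fixes \<omega> :: "('a::finite \<times> 'b::finite) pmf"
  shows "pmf (map_pmf snd \<omega>) y = (\<Sum>x\<in>UNIV. pmf \<omega> (x, y))"
proof -
  have "snd -` {y} = (UNIV::'a set) \<times> {y}" by auto
  moreover have "sum (pmf \<omega>) (UNIV \<times> {y}) = (\<Sum>a\<in>UNIV. \<Sum>b\<in>{y}. pmf \<omega> (a, b))"
    by (subst sum.cartesian_product) simp
  ultimately show ?thesis
    by (simp add: pmf_map measure_measure_pmf_finite)
qed

lemma pmf_embed_finite:
  fixes g :: "'a::finite \<Rightarrow> real"
  assumes "\<And>x. 0 \<le> g x" "(\<Sum>x\<in>UNIV. g x) = 1"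
  shows "pmf (embed_pmf g) x = g x"
proof (rule pmf_embed_pmf)
  show "\<And>x. 0 \<le> g x" by fact
  have "(\<integral>\<^sup>+x. ennreal (g x) \<partial>count_space UNIV) = (\<Sum>x\<in>UNIV. ennreal (g x))"
    by (simp add: nn_integral_count_space_finite)
  also have "\<dots> = ennreal (\<Sum>x\<in>UNIV. g x)" using assms(1) by (simp add: sum_ennreal)
  finally show "(\<integral>\<^sup>+x. ennreal (g x) \<partial>count_space UNIV) = 1" using assms(2) by simp
qed

lemma perturb:
  fixes \<mu> \<nu> \<mu>' \<nu>' :: "'a::finite pmf" and \<omega> :: "('a \<times> 'a) pmf" and f :: "'a \<times> 'a \<Rightarrow> real"
  assumes cpl: "\<omega> \<in> couplings \<mu> \<nu>"
    and f0: "\<And>z. 0 \<le> f z" and f1: "\<And>z. f z \<le> 1"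
    and e1: "\<And>x. \<bar>pmf \<mu> x - pmf \<mu>' x\<bar> \<le> e" and e2: "\<And>y. \<bar>pmf \<nu> y - pmf \<nu>' y\<bar> \<le> e"
  shows "\<exists>\<omega>'\<in>couplings \<mu>' \<nu>'. (\<Sum>z\<in>UNIV. pmf \<omega>' z * f z) \<le> (\<Sum>z\<in>UNIV. pmf \<omega> z * f z) + 2 * real CARD('a) * e"
proof -
  define w where "w = pmf \<omega>"
  define p where "p = pmf \<mu>"
  define p' where "p' = pmf \<mu>'"
  define q where "q = pmf \<nu>"
  define q' where "q' = pmf \<nu>'"
  have w0: "0 \<le> w z" for z by (simp add: w_def)
  have p0: "0 \<le> p x" "0 \<le> p' x" "0 \<le> q x" "0 \<le> q' x" for x by (simp_all add: p_def p'_def q_def q'_def)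
  have p_w: "p x = (\<Sum>y\<in>UNIV. w (x,y))" for x
    using cpl by (auto simp: couplings_def p_def w_def pmf_fst[symmetric])
  have q_w: "q y = (\<Sum>x\<in>UNIV. w (x,y))" for y
    using cpl by (auto simp: couplings_def q_def w_def pmf_snd[symmetric])
  have sp': "(\<Sum>x\<in>UNIV. p' x) = 1" "(\<Sum>x\<in>UNIV. q' x) = 1"
    by (simp_all add: p'_def q'_def sum_pmf_UNIV)
  have sw: "(\<Sum>x\<in>UNIV. \<Sum>y\<in>UNIV. w (x,y)) = 1"
    using sum_pmf_UNIV[of \<omega>] by (simp add: w_def sum_pair_UNIV)
  define a where "a x = (if p x = 0 then 1 else min 1 (p' x / p x))" for x
  define b where "b x = (if q x = 0 then 1 else min 1 (q' x / q x))" for x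
  have a01: "0 \<le> a x" "a x \<le> 1" for x using p0[of x] by (auto simp: a_def)
  have b01: "0 \<le> b x" "b x \<le> 1" for x using p0[of x] by (auto simp: b_def)
  have pa: "p x * a x = min (p x) (p' x)" for x
  proof (cases "p x = 0")
    case True then show ?thesis using p0[of x] by (simp add: a_def)
  next
    case False then have "p x > 0" using p0[of x] by simp
    then show ?thesis by (auto simp: a_def min_def field_simps)
  qed
  have qb: "q x * b x = min (q x) (q' x)" for x
  proof (cases "q x = 0")
    case True then show ?thesis using p0[of x] by (simp add: b_def)
  next
    case False then have "q x > 0" using p0[of x] by simp
    then show ?thesis by (auto simp: b_def min_def field_simps)
  qed
  define \<theta> where "\<theta> x y = w (x,y) * a x * b y" for x y
  define \<theta>1 where "\<theta>1 x = (\<Sum>y\<in>UNIV. \<theta> x y)" for x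
  define \<theta>2 where "\<theta>2 y = (\<Sum>x\<in>UNIV. \<theta> x y)" for y
  have \<theta>0: "0 \<le> \<theta> x y" for x y using w0 a01 b01 by (simp add: \<theta>_def)
  have \<theta>w: "\<theta> x y \<le> w (x,y)" for x y
  proof -
    have "a x * b y \<le> 1" using a01 b01 by (simp add: mult_le_one)
    then have "w (x,y) * (a x * b y) \<le> w (x,y) * 1" using w0 by (intro mult_left_mono) auto
    then show ?thesis by (simp add: \<theta>_def mult.assoc)
  qed
  have \<theta>1p: "\<theta>1 x \<le> p' x" for x
  proof -
    have "\<theta>1 x \<le> (\<Sum>y\<in>UNIV. w (x,y) * a x)"
      unfolding \<theta>1_def \<theta>_def
    proof (rule sum_mono)
      fix y show "w (x, y) * a x * b y \<le> w (x, y) * a x"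
        using w0 a01 b01 mult_left_mono[of "b y" 1 "w (x,y) * a x"] by simp
    qed
    also have "\<dots> = p x * a x" by (simp add: p_w sum_distrib_right)
    finally show ?thesis using pa by simp
  qed
  have \<theta>2q: "\<theta>2 y \<le> q' y" for y
  proof -
    have "\<theta>2 y \<le> (\<Sum>x\<in>UNIV. w (x,y) * b y)"
      unfolding \<theta>2_def \<theta>_def
    proof (rule sum_mono)
      fix x show "w (x, y) * a x * b y \<le> w (x, y) * b y"
        using w0 a01 b01 mult_left_mono[of "a x" 1 "w (x,y) * b y"] by (simp add: ac_simps)
    qed
    also have "\<dots> = q y * b y" by (simp add: q_w sum_distrib_right)
    finally show ?thesis using qb by simp
  qed
  define S where "S = (\<Sum>x\<in>UNIV. \<theta>1 x)"
  have S2: "S = (\<Sum>y\<in>UNIV. \<theta>2 y)" unfolding S_def \<theta>1_def \<theta>2_def by (rule sum.swap)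
  define r where "r = 1 - S"
  have r_eq: "r = (\<Sum>x\<in>UNIV. \<Sum>y\<in>UNIV. w (x,y) - \<theta> x y)"
    by (simp add: r_def S_def \<theta>1_def sum_subtractf sw)
  have r0: "0 \<le> r" unfolding r_eq by (intro sum_nonneg) (use \<theta>w in auto)
  have res1: "(\<Sum>x\<in>UNIV. p' x - \<theta>1 x) = r" by (simp add: sum_subtractf sp' r_def S_def)
  have res2: "(\<Sum>y\<in>UNIV. q' y - \<theta>2 y) = r" by (simp add: sum_subtractf sp' r_def S2)
  have rb: "r \<le> 2 * real CARD('a) * e"
  proof -
    have "r \<le> (\<Sum>x\<in>UNIV. \<Sum>y\<in>UNIV. w (x,y) * (1 - a x) + w (x,y) * (1 - b y))"
      unfolding r_eq
    proof (intro sum_mono)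
      fix x y
      have "(1 - a x) * (1 - b y) \<ge> 0" using a01 b01 by simp
      then have "1 - a x * b y \<le> (1 - a x) + (1 - b y)" by (simp add: algebra_simps)
      then have "w (x,y) * (1 - a x * b y) \<le> w (x,y) * ((1 - a x) + (1 - b y))"
        using w0 by (intro mult_left_mono) auto
      then show "w (x, y) - \<theta> x y \<le> w (x, y) * (1 - a x) + w (x, y) * (1 - b y)"
        by (simp add: \<theta>_def algebra_simps)
    qed
    also have "\<dots> = (\<Sum>x\<in>UNIV. \<Sum>y\<in>UNIV. w (x,y) * (1 - a x)) + (\<Sum>y\<in>UNIV. \<Sum>x\<in>UNIV. w (x,y) * (1 - b y))"
      by (simp only: sum.distrib, subst (2) sum.swap, rule refl)
    also have "(\<Sum>x\<in>UNIV. \<Sum>y\<in>UNIV. w (x,y) * (1 - a x)) = (\<Sum>x\<in>UNIV. p x - min (p x) (p' x))"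
      by (intro sum.cong refl, subst sum_distrib_right[symmetric]) (simp add: p_w[symmetric] right_diff_distrib pa[symmetric])
    also have "(\<Sum>y\<in>UNIV. \<Sum>x\<in>UNIV. w (x,y) * (1 - b y)) = (\<Sum>y\<in>UNIV. q y - min (q y) (q' y))"
      by (intro sum.cong refl, subst sum_distrib_right[symmetric]) (simp add: q_w[symmetric] right_diff_distrib qb[symmetric])
    also have "(\<Sum>x\<in>UNIV. p x - min (p x) (p' x)) \<le> (\<Sum>x\<in>(UNIV::'a set). e)"
      proof (intro sum_mono)
      fix x show "p x - min (p x) (p' x) \<le> e" using e1[of x] unfolding p_def p'_def abs_le_iff by linarith
    qed
    also have "(\<Sum>y\<in>UNIV. q y - min (q y) (q' y)) \<le> (\<Sum>x\<in>(UNIV::'a set). e)"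
      proof (intro sum_mono)
      fix x show "q x - min (q x) (q' x) \<le> e" using e2[of x] unfolding q_def q'_def abs_le_iff by linarith
    qed
    finally show ?thesis by (simp add: ac_simps)
  qed
  define g where "g z = \<theta> (fst z) (snd z) + (p' (fst z) - \<theta>1 (fst z)) * (q' (snd z) - \<theta>2 (snd z)) / r" for z
  have g0: "0 \<le> g z" for z
    using \<theta>0 \<theta>1p \<theta>2q r0 by (simp add: g_def)
  have zero1: "r = 0 \<Longrightarrow> p' x - \<theta>1 x = 0" for x
    using res1 sum_nonneg_eq_0_iff[of UNIV "\<lambda>x. p' x - \<theta>1 x"] \<theta>1p by auto
  have zero2: "r = 0 \<Longrightarrow> q' y - \<theta>2 y = 0" for y
    using res2 sum_nonneg_eq_0_iff[of UNIV "\<lambda>y. q' y - \<theta>2 y"] \<theta>2q by auto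
  have g1: "(\<Sum>y\<in>UNIV. g (x,y)) = p' x" for x
  proof -
    have "(\<Sum>y\<in>UNIV. g (x,y)) = \<theta>1 x + (p' x - \<theta>1 x) * (\<Sum>y\<in>UNIV. q' y - \<theta>2 y) / r"
      by (simp add: g_def sum.distrib \<theta>1_def sum_divide_distrib[symmetric] sum_distrib_left)
    also have "\<dots> = p' x" using zero1[of x] by (cases "r = 0") (auto simp: res2)
    finally show ?thesis .
  qed
  have g2: "(\<Sum>x\<in>UNIV. g (x,y)) = q' y" for y
  proof -
    have "(\<Sum>x\<in>UNIV. g (x,y)) = \<theta>2 y + (\<Sum>x\<in>UNIV. p' x - \<theta>1 x) * (q' y - \<theta>2 y) / r"
      by (simp add: g_def sum.distrib \<theta>2_def sum_divide_distrib[symmetric] sum_distrib_right)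
    also have "\<dots> = q' y" using zero2[of y] by (cases "r = 0") (auto simp: res1)
    finally show ?thesis .
  qed
  have gs: "(\<Sum>z\<in>UNIV. g z) = 1" by (simp add: sum_pair_UNIV g1 sp')
  define \<omega>' where "\<omega>' = embed_pmf g"
  have pw': "pmf \<omega>' z = g z" for z unfolding \<omega>'_def by (rule pmf_embed_finite[OF g0 gs])
  have cpl': "\<omega>' \<in> couplings \<mu>' \<nu>'"
    unfolding couplings_def
    by (auto intro!: pmf_eqI simp: pmf_fst pmf_snd pw' g1 g2 p'_def q'_def)
  have "(\<Sum>z\<in>UNIV. pmf \<omega>' z * f z) = (\<Sum>x\<in>UNIV. \<Sum>y\<in>UNIV. \<theta> x y * f (x,y))
     + (\<Sum>x\<in>UNIV. \<Sum>y\<in>UNIV. (p' x - \<theta>1 x) * (q' y - \<theta>2 y) / r * f (x,y))"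
    by (simp add: sum_pair_UNIV pw' g_def sum.distrib algebra_simps)
  also have "(\<Sum>x\<in>UNIV. \<Sum>y\<in>UNIV. \<theta> x y * f (x,y)) \<le> (\<Sum>x\<in>UNIV. \<Sum>y\<in>UNIV. w (x,y) * f (x,y))"
    by (intro sum_mono mult_right_mono \<theta>w f0)
  also have "(\<Sum>x\<in>UNIV. \<Sum>y\<in>UNIV. (p' x - \<theta>1 x) * (q' y - \<theta>2 y) / r * f (x,y))
       \<le> (\<Sum>x\<in>UNIV. \<Sum>y\<in>UNIV. (p' x - \<theta>1 x) * (q' y - \<theta>2 y) / r)"
  proof (intro sum_mono)
    fix x y
    have "0 \<le> (p' x - \<theta>1 x) * (q' y - \<theta>2 y) / r" using \<theta>1p \<theta>2q r0 by simp
    then show "(p' x - \<theta>1 x) * (q' y - \<theta>2 y) / r * f (x, y) \<le> (p' x - \<theta>1 x) * (q' y - \<theta>2 y) / r"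
      using mult_left_mono[OF f1[of "(x,y)"]] by fastforce
  qed
  also have "(\<Sum>x\<in>UNIV. \<Sum>y\<in>UNIV. (p' x - \<theta>1 x) * (q' y - \<theta>2 y) / r) = r * r / r"
  proof -
    have "(\<Sum>x\<in>UNIV. \<Sum>y\<in>UNIV. (p' x - \<theta>1 x) * (q' y - \<theta>2 y) / r)
       = (\<Sum>x\<in>UNIV. p' x - \<theta>1 x) * (\<Sum>y\<in>UNIV. q' y - \<theta>2 y) / r"
      by (simp only: sum_product sum_divide_distrib)
    then show ?thesis by (simp add: res1 res2)
  qed
  also have "r * r / r \<le> r" by (cases "r = 0") auto
  finally have "(\<Sum>z\<in>UNIV. pmf \<omega>' z * f z) \<le> (\<Sum>z\<in>UNIV. pmf \<omega> z * f z) + r"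
    by (simp add: sum_pair_UNIV w_def)
  then show ?thesis using cpl' rb by force
qed


section \<open>Least fixed point\<close>

lemma cost_bounds:
  fixes d :: "'a::finite \<Rightarrow> 'a \<Rightarrow> real"
  assumes "unit_valued d"
  shows "0 \<le> (\<Sum>(u, v)\<in>UNIV. pmf \<omega> (u, v) * d u v)" "(\<Sum>(u, v)\<in>UNIV. pmf \<omega> (u, v) * d u v) \<le> 1"
proof -
  show "0 \<le> (\<Sum>(u, v)\<in>UNIV. pmf \<omega> (u, v) * d u v)"
    using assms by (intro sum_nonneg) (auto simp: unit_valued_def)
  have "(\<Sum>(u, v)\<in>UNIV. pmf \<omega> (u, v) * d u v) \<le> (\<Sum>z\<in>UNIV. pmf \<omega> z)"
    using assms by (intro sum_mono) (auto simp: unit_valued_def intro: mult_left_le)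
  then show "(\<Sum>(u, v)\<in>UNIV. pmf \<omega> (u, v) * d u v) \<le> 1" by (simp add: sum_pmf_UNIV)
qed

lemma couplings_ne: "pair_pmf \<mu> \<nu> \<in> couplings \<mu> \<nu>"
  by (simp add: couplings_def map_fst_pair_pmf map_snd_pair_pmf)

lemma bdd_cost:
  fixes d :: "'a::finite \<Rightarrow> 'a \<Rightarrow> real"
  assumes "unit_valued d"
  shows "bdd_below ((\<lambda>\<omega>. \<Sum>(u, v)\<in>UNIV. pmf \<omega> (u, v) * d u v) ` C)"
  using cost_bounds(1)[OF assms] by (intro bdd_belowI[where m=0]) auto

lemma Delta_le:
  fixes d :: "'a::finite \<Rightarrow> 'a \<Rightarrow> real"
  assumes "unit_valued d" "lab x = lab y" "\<omega> \<in> couplings (\<sigma> x) (\<sigma> y)"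
  shows "Delta \<sigma> lab d x y \<le> (\<Sum>(u, v)\<in>UNIV. pmf \<omega> (u, v) * d u v)"
  using assms by (simp add: Delta_def cINF_lower[OF bdd_cost[OF assms(1)]])

lemma Delta_bounds:
  fixes d :: "'a::finite \<Rightarrow> 'a \<Rightarrow> real"
  assumes "unit_valued d"
  shows "0 \<le> Delta \<sigma> lab d x y" "Delta \<sigma> lab d x y \<le> 1"
proof -
  show "0 \<le> Delta \<sigma> lab d x y"
    unfolding Delta_def using couplings_ne cost_bounds(1)[OF assms]
    by (auto intro!: cINF_greatest)
  show "Delta \<sigma> lab d x y \<le> 1"
  proof (cases "lab x = lab y")
    case True
    then show ?thesis using Delta_le[OF assms True couplings_ne] cost_bounds(2)[OF assms] by (meson order_trans)
  qed (simp add: Delta_def)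
qed

lemma Delta_unit: "unit_valued d \<Longrightarrow> unit_valued (Delta (\<sigma>::'a::finite \<Rightarrow> 'a pmf) lab d)"
  using Delta_bounds unfolding unit_valued_def by blast

lemma Delta_mono:
  fixes d1 d2 :: "'a::finite \<Rightarrow> 'a \<Rightarrow> real"
  assumes "unit_valued d1" "d1 \<le> d2"
  shows "Delta \<sigma> lab d1 \<le> Delta \<sigma> lab d2"
proof (intro le_funI)
  fix x y
  show "Delta \<sigma> lab d1 x y \<le> Delta \<sigma> lab d2 x y"
  proof (cases "lab x = lab y")
    case True
    have "(\<Sum>(u, v)\<in>UNIV. pmf \<omega> (u, v) * d1 u v) \<le> (\<Sum>(u, v)\<in>UNIV. pmf \<omega> (u, v) * d2 u v)" for \<omega>
      using assms(2) by (intro sum_mono) (auto intro: mult_left_mono simp: le_fun_def)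
    then show ?thesis using True
      by (simp add: Delta_def) (intro cINF_mono[OF _ bdd_cost[OF assms(1)]], use couplings_ne in auto)
  qed (simp add: Delta_def)
qed

lemma delta_props:
  fixes \<sigma> :: "'a::finite \<Rightarrow> 'a pmf"
  shows "unit_valued (delta \<sigma> lab)" "Delta \<sigma> lab (delta \<sigma> lab) = delta \<sigma> lab"
    "\<And>d. unit_valued d \<Longrightarrow> Delta \<sigma> lab d \<le> d \<Longrightarrow> delta \<sigma> lab \<le> d"
proof -
  define A where "A = {d. unit_valued d \<and> Delta \<sigma> lab d \<le> d}"
  define d0 where "d0 x y = (INF d\<in>A. d x y)" for x y
  have one: "(\<lambda>_ _. 1) \<in> A" unfolding A_def
    by (auto simp: unit_valued_def le_fun_def intro: Delta_bounds(2))
  have bdd: "bdd_below ((\<lambda>d. d x y) ` A)" for x y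
    by (intro bdd_belowI[where m=0]) (auto simp: A_def unit_valued_def)
  have low: "d \<in> A \<Longrightarrow> d0 \<le> d" for d
    unfolding le_fun_def d0_def using cINF_lower[OF bdd] by blast
  have u0: "unit_valued d0"
    unfolding unit_valued_def
  proof (intro allI conjI)
    fix x y
    show "0 \<le> d0 x y" unfolding d0_def
    proof (rule cINF_greatest)
      show "A \<noteq> {}" using one by auto
      fix d assume "d \<in> A" then show "0 \<le> d x y" by (auto simp: A_def unit_valued_def)
    qed
    show "d0 x y \<le> 1" using low[OF one] by (simp add: le_fun_def)
  qed
  have pre: "Delta \<sigma> lab d0 \<le> d0"
  proof (intro le_funI)
    fix x y
    show "Delta \<sigma> lab d0 x y \<le> d0 x y"
      unfolding d0_def[of x y]
    proof (rule cINF_greatest)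
      show "A \<noteq> {}" using one by auto
      fix d assume "d \<in> A"
      then have "Delta \<sigma> lab d0 \<le> Delta \<sigma> lab d" "Delta \<sigma> lab d \<le> d"
        using Delta_mono[OF u0 low] by (auto simp: A_def)
      then have "Delta \<sigma> lab d0 x y \<le> Delta \<sigma> lab d x y" "Delta \<sigma> lab d x y \<le> d x y"
        by (simp_all add: le_fun_def)
      then show "Delta \<sigma> lab d0 x y \<le> d x y" by linarith
    qed
  qed
  have "Delta \<sigma> lab d0 \<in> A"
    unfolding A_def using Delta_unit[OF u0] Delta_mono[OF Delta_unit[OF u0] pre] pre
    by auto
  then have fix0: "Delta \<sigma> lab d0 = d0" using low pre by (auto intro: order.antisym)
  have P0: "unit_valued d0 \<and> Delta \<sigma> lab d0 = d0 \<and>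
       (\<forall>d'. unit_valued d' \<and> Delta \<sigma> lab d' = d' \<longrightarrow> d0 \<le> d')"
    using u0 fix0 low by (auto simp: A_def)
  have "delta \<sigma> lab = d0"
    unfolding delta_def
  proof (rule the_equality)
    show "unit_valued d0 \<and> Delta \<sigma> lab d0 = d0 \<and>
       (\<forall>d'. unit_valued d' \<and> Delta \<sigma> lab d' = d' \<longrightarrow> d0 \<le> d')" by (rule P0)
    fix d assume "unit_valued d \<and> Delta \<sigma> lab d = d \<and>
       (\<forall>d'. unit_valued d' \<and> Delta \<sigma> lab d' = d' \<longrightarrow> d \<le> d')"
    then show "d = d0" using P0 by (auto intro: order.antisym)
  qed
  then show "unit_valued (delta \<sigma> lab)" "Delta \<sigma> lab (delta \<sigma> lab) = delta \<sigma> lab"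
    "\<And>d. unit_valued d \<Longrightarrow> Delta \<sigma> lab d \<le> d \<Longrightarrow> delta \<sigma> lab \<le> d"
    using u0 fix0 low by (auto simp: A_def)
qed

lemma delta_diag:
  fixes \<sigma> :: "'a::finite \<Rightarrow> 'a pmf"
  shows "delta \<sigma> lab x x = 0"
proof -
  define dz where "dz u v = (if u = v then 0 else (1::real))" for u v :: 'a
  have uz: "unit_valued dz" by (simp add: unit_valued_def dz_def)
  have "Delta \<sigma> lab dz \<le> dz"
  proof (intro le_funI)
    fix u v
    show "Delta \<sigma> lab dz u v \<le> dz u v"
    proof (cases "u = v")
      case True
      define \<omega> where "\<omega> = map_pmf (\<lambda>z. (z, z)) (\<sigma> u)"
      have c: "\<omega> \<in> couplings (\<sigma> u) (\<sigma> v)"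
        using True by (simp add: \<omega>_def couplings_def pmf.map_comp o_def)
      have "(\<Sum>(a, b)\<in>UNIV. pmf \<omega> (a, b) * dz a b) = 0"
      proof (intro sum.neutral ballI)
        fix z :: "'a \<times> 'a"
        obtain a b where z: "z = (a, b)" by (cases z)
        have "a \<noteq> b \<Longrightarrow> pmf \<omega> (a, b) = 0"
        proof -
          assume "a \<noteq> b"
          then have "(\<lambda>z. (z, z)) -` {(a, b)} = {}" by auto
          then show ?thesis by (simp add: \<omega>_def pmf_map)
        qed
        then show "(case z of (a, b) \<Rightarrow> pmf \<omega> (a, b) * dz a b) = 0"
          by (auto simp: z dz_def)
      qed
      then show ?thesis using Delta_le[OF uz _ c] True by (simp add: dz_def)
    next
      case False
      then show ?thesis using Delta_bounds(2)[OF uz] by (simp add: dz_def)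
    qed
  qed
  then have "delta \<sigma> lab \<le> dz" using delta_props(3)[OF uz] by blast
  then have "delta \<sigma> lab x x \<le> dz x x" by (simp add: le_fun_def)
  then have "delta \<sigma> lab x x \<le> 0" by (simp add: dz_def)
  moreover have "0 \<le> delta \<sigma> lab x x" using delta_props(1) by (auto simp: unit_valued_def)
  ultimately show ?thesis by simp
qed


section \<open>Reachability\<close>

lemma rw_T: "x \<in> T \<Longrightarrow> reach_within P T n x = 1"
  by (cases n) auto

lemma rw_Suc:
  fixes P :: "'b::finite \<Rightarrow> 'b pmf"
  shows "x \<notin> T \<Longrightarrow> reach_within P T (Suc n) x = (\<Sum>z\<in>UNIV. pmf (P x) z * reach_within P T n z)"
  by (simp add: expect_sum)

lemma rw_01:
  fixes P :: "'b::finite \<Rightarrow> 'b pmf"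
  shows "0 \<le> reach_within P T n x \<and> reach_within P T n x \<le> 1"
proof (induction n arbitrary: x)
  case 0 then show ?case by simp
next
  case (Suc n)
  show ?case
  proof (cases "x \<in> T")
    case False
    have "0 \<le> (\<Sum>z\<in>UNIV. pmf (P x) z * reach_within P T n z)"
      using Suc by (intro sum_nonneg) auto
    moreover have "(\<Sum>z\<in>UNIV. pmf (P x) z * reach_within P T n z) \<le> (\<Sum>z\<in>UNIV. pmf (P x) z)"
      using Suc by (intro sum_mono) (auto intro: mult_left_le)
    ultimately show ?thesis using False by (simp only: rw_Suc[OF False] sum_pmf_UNIV)
  qed simp
qed

lemma rw_mono_Suc:
  fixes P :: "'b::finite \<Rightarrow> 'b pmf"
  shows "reach_within P T n x \<le> reach_within P T (Suc n) x"
proof (induction n arbitrary: x)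
  case 0 then show ?case using rw_01[of P T "Suc 0" x] by simp
next
  case (Suc n)
  show ?case
  proof (cases "x \<in> T")
    case False
    have "(\<Sum>z\<in>UNIV. pmf (P x) z * reach_within P T n z) \<le> (\<Sum>z\<in>UNIV. pmf (P x) z * reach_within P T (Suc n) z)"
      using Suc by (intro sum_mono mult_left_mono) auto
    then show ?thesis by (simp only: rw_Suc[OF False])
  qed simp
qed

lemma rw_mono:
  fixes P :: "'b::finite \<Rightarrow> 'b pmf"
  shows "m \<le> n \<Longrightarrow> reach_within P T m x \<le> reach_within P T n x"
  using lift_Suc_mono_le[of "\<lambda>n. reach_within P T n x"] rw_mono_Suc by blast

lemma rw_bdd:
  fixes P :: "'b::finite \<Rightarrow> 'b pmf"
  shows "bdd_above (range (\<lambda>n. reach_within P T n x))"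
  using rw_01 by (intro bdd_aboveI[where M=1]) auto

lemma rw_le_rp:
  fixes P :: "'b::finite \<Rightarrow> 'b pmf"
  shows "reach_within P T n x \<le> reach_prob P T x"
  unfolding reach_prob_def by (rule cSUP_upper[OF _ rw_bdd]) simp

lemma rp_le1:
  fixes P :: "'b::finite \<Rightarrow> 'b pmf"
  shows "reach_prob P T x \<le> 1"
  unfolding reach_prob_def using rw_01 by (intro cSUP_least) auto

lemma rp_half:
  fixes P :: "'b::finite \<Rightarrow> 'b pmf"
  assumes "reach_prob P T x = 1"
  shows "\<exists>n. 1/2 < reach_within P T n x"
proof (rule ccontr)
  assume "\<not> ?thesis"
  then have h: "\<forall>n. reach_within P T n x \<le> 1/2" by (metis not_less)
  have "reach_prob P T x \<le> 1/2"
    unfolding reach_prob_def by (intro cSUP_least) (use h in auto)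
  then show False using assms by simp
qed

lemma rp_succ:
  fixes P :: "'b::finite \<Rightarrow> 'b pmf"
  assumes x: "x \<notin> T" "reach_prob P T x = 1" and y: "y \<in> set_pmf (P x)" "y \<notin> T"
  shows "reach_prob P T y = 1"
proof (rule ccontr)
  assume ne: "reach_prob P T y \<noteq> 1"
  define r where "r = reach_prob P T y"
  have r1: "r < 1" using ne rp_le1[of P T y] by (simp add: r_def)
  define c where "c = pmf (P x) y"
  have c0: "0 < c" using y by (simp add: c_def pmf_positive)
  have bound: "reach_within P T n x \<le> 1 - c * (1 - r)" for n
  proof (cases n)
    case 0
    have "c \<le> 1" by (simp add: c_def pmf_le_1)
    then have "c * (1 - r) \<le> 1" using r1 rw_le_rp[of P T 0 y] rw_01[of P T 0 y]
      by (simp add: r_def) (smt (verit, ccfv_SIG) mult_le_one)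
    then show ?thesis using 0 x by simp
  next
    case (Suc m)
    have "(\<Sum>z\<in>UNIV. pmf (P x) z * reach_within P T m z)
        \<le> (\<Sum>z\<in>UNIV. pmf (P x) z * (1 - (if z = y then 1 - r else 0)))"
    proof (intro sum_mono mult_left_mono)
      fix z show "reach_within P T m z \<le> 1 - (if z = y then 1 - r else 0)"
        using rw_01[of P T m z] rw_le_rp[of P T m y] by (auto simp: r_def)
    qed simp
    also have "\<dots> = (\<Sum>z\<in>UNIV. pmf (P x) z) - (\<Sum>z\<in>UNIV. pmf (P x) z * (if z = y then 1 - r else 0))"
      by (simp only: right_diff_distrib mult_1_right sum_subtractf)
    also have "(\<Sum>z\<in>UNIV. pmf (P x) z * (if z = y then 1 - r else 0)) = (\<Sum>z\<in>UNIV. (if z = y then c * (1 - r) else 0))"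
      by (intro sum.cong) (auto simp: c_def)
    also have "(\<Sum>z\<in>UNIV. pmf (P x) z) - (\<Sum>z\<in>UNIV. (if z = y then c * (1 - r) else 0)) = 1 - c * (1 - r)"
      by (simp add: sum_pmf_UNIV)
    finally show ?thesis using x Suc by (simp add: expect_sum)
  qed
  then have "reach_prob P T x \<le> 1 - c * (1 - r)"
    unfolding reach_prob_def by (intro cSUP_least) auto
  moreover have "0 < c * (1 - r)" using c0 r1 by simp
  ultimately show False using x by linarith
qed


lemma in_diag: "(a, b) \<in> diag \<longleftrightarrow> a = b"
  by (auto simp: diag_def)

lemma dF_ge:
  fixes \<sigma> \<tau> :: "'a::finite \<Rightarrow> 'a pmf"
  shows "\<bar>pmf (\<tau> u) y - pmf (\<sigma> u) y\<bar> \<le> dF \<sigma> \<tau>"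
proof -
  have "\<bar>pmf (\<sigma> u) y - pmf (\<tau> u) y\<bar> \<le> dF \<sigma> \<tau>"
    unfolding dF_def
    by (rule Max_ge) (simp, rule image_eqI[where x="(u, y)"], auto)
  then show ?thesis by (simp add: abs_minus_commute)
qed

lemma dF_nonneg:
  fixes \<sigma> \<tau> :: "'a::finite \<Rightarrow> 'a pmf"
  shows "0 \<le> dF \<sigma> \<tau>"
  using dF_ge[where u=undefined and y=undefined and \<sigma>=\<sigma> and \<tau>=\<tau>] by linarith

lemma U_lab:
  fixes \<tau> :: "'a::finite \<Rightarrow> 'a pmf"
  assumes P: "P \<in> policies \<tau> lab" and r: "reach_prob P diag (u, v) = 1"
  shows "lab u = lab v"
proof (rule ccontr)
  assume ne: "lab u \<noteq> lab v"
  then have nd: "(u, v) \<notin> diag" by (auto simp: in_diag)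
  have Pr: "P (u, v) = return_pmf (u, v)" using P ne by (auto simp: policies_def)
  have "reach_within P diag n (u, v) = 0" for n
    by (induction n) (use nd Pr in auto)
  then have "reach_prob P diag (u, v) = 0" by (simp add: reach_prob_def)
  then show False using r by simp
qed

lemma key:
  fixes \<tau> \<sigma> :: "'a::finite \<Rightarrow> 'a pmf" and P :: "'a \<times> 'a \<Rightarrow> ('a \<times> 'a) pmf"
  assumes P: "P \<in> policies \<tau> lab"
    and U: "U = {x. x \<notin> diag \<and> reach_prob P diag x = 1}"
    and k: "\<forall>x\<in>U. 1/2 \<le> reach_within P diag k x"
    and xU: "x \<in> U"
  shows "delta \<sigma> lab (fst x) (snd x) \<le> 2 * real k * (2 * real CARD('a) * dF \<sigma> \<tau>)"
proof -
  define D where "D = delta \<sigma> lab"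
  define \<eta> where "\<eta> = 2 * real CARD('a) * dF \<sigma> \<tau>"
  have \<eta>0: "0 \<le> \<eta>" using dF_nonneg[of \<sigma> \<tau>] by (simp add: \<eta>_def)
  have DU: "unit_valued D" and Dfix: "Delta \<sigma> lab D = D"
    using delta_props[where \<sigma>=\<sigma> and lab=lab] by (simp_all add: D_def)
  have D01: "0 \<le> D a b" "D a b \<le> 1" for a b using DU by (auto simp: unit_valued_def)
  have Dd: "D a a = 0" for a by (simp add: D_def delta_diag)
  have succ: "z \<in> U \<or> z \<in> diag" if "y \<in> U" "z \<in> set_pmf (P y)" for y z
    using rp_succ[of y diag P z] that U by auto
  have step: "D (fst y) (snd y) \<le> (\<Sum>z\<in>UNIV. pmf (P y) z * D (fst z) (snd z)) + \<eta>" if yU: "y \<in> U" for y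
  proof -
    obtain u v where y: "y = (u, v)" by (cases y)
    have lab: "lab u = lab v" using U_lab[OF P] yU U y by auto
    have c: "P (u, v) \<in> couplings (\<tau> u) (\<tau> v)" using P lab by (auto simp: policies_def)
    obtain \<omega>' where c': "\<omega>' \<in> couplings (\<sigma> u) (\<sigma> v)"
      and b: "(\<Sum>z\<in>UNIV. pmf \<omega>' z * D (fst z) (snd z)) \<le> (\<Sum>z\<in>UNIV. pmf (P (u, v)) z * D (fst z) (snd z)) + \<eta>"
      using perturb[OF c, where f="\<lambda>z. D (fst z) (snd z)" and e="dF \<sigma> \<tau>" and \<mu>'="\<sigma> u" and \<nu>'="\<sigma> v"] D01 dF_ge[where u=u and \<sigma>=\<sigma> and \<tau>=\<tau>] dF_ge[where u=v and \<sigma>=\<sigma> and \<tau>=\<tau>]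
      unfolding \<eta>_def by blast
    have "D u v = Delta \<sigma> lab D u v" using Dfix by simp
    also have "\<dots> \<le> (\<Sum>(a, b)\<in>UNIV. pmf \<omega>' (a, b) * D a b)" by (rule Delta_le[OF DU lab c'])
    also have "\<dots> = (\<Sum>z\<in>UNIV. pmf \<omega>' z * D (fst z) (snd z))" by (simp add: split_def)
    finally show ?thesis using b y by simp
  qed
  define M where "M = Max (insert 0 ((\<lambda>x. D (fst x) (snd x)) ` U))"
  have M0: "0 \<le> M" unfolding M_def by (rule Max_ge) auto
  have MU: "D (fst y) (snd y) \<le> M" if "y \<in> U" for y unfolding M_def using that by (intro Max_ge) auto
  have ind: "\<forall>y\<in>U. D (fst y) (snd y) \<le> M * (1 - reach_within P diag j y) + real j * \<eta>" for j
  proof (induction j)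
    case 0
    show ?case using MU U by auto
  next
    case (Suc j)
    show ?case
    proof
      fix y assume yU: "y \<in> U"
      then have ynd: "y \<notin> diag" using U by auto
      let ?R = "reach_within P diag j"
      have "D (fst y) (snd y) \<le> (\<Sum>z\<in>UNIV. pmf (P y) z * D (fst z) (snd z)) + \<eta>" by (rule step[OF yU])
      also have "(\<Sum>z\<in>UNIV. pmf (P y) z * D (fst z) (snd z)) \<le> (\<Sum>z\<in>UNIV. pmf (P y) z * (M * (1 - ?R z) + real j * \<eta>))"
      proof (intro sum_mono)
        fix z
        show "pmf (P y) z * D (fst z) (snd z) \<le> pmf (P y) z * (M * (1 - ?R z) + real j * \<eta>)"
        proof (cases "z \<in> set_pmf (P y)")
          case True
          have "D (fst z) (snd z) \<le> M * (1 - ?R z) + real j * \<eta>"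
          proof (cases "z \<in> U")
            case True then show ?thesis using Suc.IH by blast
          next
            case False
            then have "z \<in> diag" using succ[OF yU \<open>z \<in> set_pmf (P y)\<close>] by blast
            then obtain a where "z = (a, a)" by (auto simp: diag_def)
            then show ?thesis using \<open>z \<in> diag\<close> rw_T[of z diag P j] Dd \<eta>0 by simp
          qed
          then show ?thesis by (intro mult_left_mono) auto
        next
          case False
          then show ?thesis by (simp add: set_pmf_iff)
        qed
      qed
      also have "(\<Sum>z\<in>UNIV. pmf (P y) z * (M * (1 - ?R z) + real j * \<eta>))
          = M * (\<Sum>z\<in>UNIV. pmf (P y) z) - M * (\<Sum>z\<in>UNIV. pmf (P y) z * ?R z) + real j * \<eta> * (\<Sum>z\<in>UNIV. pmf (P y) z)"
      proof -
        have "\<And>z. pmf (P y) z * (M * (1 - ?R z) + real j * \<eta>) = M * pmf (P y) z - M * (pmf (P y) z * ?R z) + real j * \<eta> * pmf (P y) z"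
          by (simp add: algebra_simps)
        then show ?thesis by (simp only: sum.distrib sum_subtractf sum_distrib_left)
      qed
      also have "\<dots> = M * (1 - reach_within P diag (Suc j) y) + real j * \<eta>"
        using ynd by (simp add: expect_sum sum_pmf_UNIV algebra_simps)
      finally show "D (fst y) (snd y) \<le> M * (1 - reach_within P diag (Suc j) y) + real (Suc j) * \<eta>"
        by (simp add: algebra_simps)
    qed
  qed
  have half: "D (fst y) (snd y) \<le> M / 2 + real k * \<eta>" if "y \<in> U" for y
  proof -
    have "D (fst y) (snd y) \<le> M * (1 - reach_within P diag k y) + real k * \<eta>" using ind that by blast
    moreover have "M * (1 - reach_within P diag k y) \<le> M * (1/2)"
      using k that M0 by (intro mult_left_mono) auto
    ultimately show ?thesis by simp
  qed
  have "M \<in> insert 0 ((\<lambda>x. D (fst x) (snd x)) ` U)" unfolding M_def by (rule Max_in) auto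
  then have "M \<le> M / 2 + real k * \<eta>" using half \<eta>0 by auto
  then have "M \<le> 2 * real k * \<eta>" by simp
  then show ?thesis using MU[OF xU] by (simp add: D_def \<eta>_def)
qed

theorem theorem1:
  fixes \<tau> :: "'a::finite \<Rightarrow> 'a pmf" and lab :: "'a \<Rightarrow> 'l"
    and s t :: 'a and \<tau>s :: "nat \<Rightarrow> 'a \<Rightarrow> 'a pmf"
  assumes "card (range lab) \<ge> 2"
    and "robust_bisim \<tau> lab s t"
    and "(\<lambda>n. dF (\<tau>s n) \<tau>) \<longlonglongrightarrow> 0"
  shows "(\<lambda>n. delta (\<tau>s n) lab s t) \<longlonglongrightarrow> 0"
proof -
  obtain P where P: "P \<in> policies \<tau> lab" and r: "reach_prob P diag (s, t) = 1"
    using assms(2) by (auto simp: robust_bisim_def)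
  define U where "U = {x. x \<notin> diag \<and> reach_prob P diag x = 1}"
  define N where "N x = (SOME n. 1/2 < reach_within P diag n x)" for x
  define k where "k = Max (N ` U)"
  have k: "\<forall>x\<in>U. 1/2 \<le> reach_within P diag k x"
  proof
    fix x assume x: "x \<in> U"
    have "1/2 < reach_within P diag (N x) x"
      unfolding N_def by (rule someI_ex) (rule rp_half, use x U_def in auto)
    moreover have "N x \<le> k" unfolding k_def using x by (intro Max_ge) auto
    ultimately show "1/2 \<le> reach_within P diag k x" using rw_mono[of "N x" k P diag x] by simp
  qed
  define C where "C = 2 * real k * (2 * real CARD('a))"
  have bnd: "0 \<le> delta (\<tau>s n) lab s t \<and> delta (\<tau>s n) lab s t \<le> C * dF (\<tau>s n) \<tau>" for n
  proof
    show "0 \<le> delta (\<tau>s n) lab s t" using delta_props(1) by (auto simp: unit_valued_def)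
    show "delta (\<tau>s n) lab s t \<le> C * dF (\<tau>s n) \<tau>"
    proof (cases "s = t")
      case True
      have "0 \<le> C * dF (\<tau>s n) \<tau>" by (intro mult_nonneg_nonneg) (simp_all add: C_def dF_nonneg)
      then show ?thesis using True delta_diag[of "\<tau>s n" lab t] by simp
    next
      case False
      then have "(s, t) \<in> U" using r by (simp add: U_def in_diag)
      then show ?thesis using key[OF P U_def k, of "(s, t)" "\<tau>s n"] by (simp add: C_def mult.assoc)
    qed
  qed
  show ?thesis
  proof (rule real_tendsto_sandwich[where f="\<lambda>n. 0" and h="\<lambda>n. C * dF (\<tau>s n) \<tau>"])
    show "\<forall>\<^sub>F n in sequentially. 0 \<le> delta (\<tau>s n) lab s t" using bnd by simp
    show "\<forall>\<^sub>F n in sequentially. delta (\<tau>s n) lab s t \<le> C * dF (\<tau>s n) \<tau>" using bnd by simp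
    show "(\<lambda>n. 0) \<longlonglongrightarrow> (0::real)" by simp
    show "(\<lambda>n. C * dF (\<tau>s n) \<tau>) \<longlonglongrightarrow> 0" by (rule tendsto_mult_right_zero[OF assms(3)])
  qed
qed

end
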